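(* Let $\Omega\subset\mathbb{R}^3$ be open, $T>0$, and let $A:[0,T]\times\Omega\to\mathbb{T}$ and $\gamma:[0,T]\times\Omega\to\mathbb{S}$ be sufficiently smooth (classical) fields solving $$\operatorname{div} A=0,\qquad A_t+\operatorname{curl} S\gamma=0,\qquad S\gamma_t-\operatorname{sym}\operatorname{curl} A=0,\qquad \operatorname{div}\operatorname{div} S\gamma=0 .$$ Let $A_0:=A(0)$, $\alpha:=\tfrac12\operatorname{tr}\gamma$ and $\beta(t):=\tfrac12\int_0^t\operatorname{div}S\gamma(s)\,ds+\operatorname{vskw}A_0$. Then $$\gamma_{tt}+S\operatorname{inc}\gamma-2\operatorname{def}\beta_t-2\operatorname{hess}\alpha=0 .$$
   Context: $\mathbb{M}$ is the space of real $3\times3$ matrices, $\mathbb{S}$ the symmetric ones, $\mathbb{T}$ the trace-free ones. For $M\in\mathbb{M}$: $S(M):=M^\top-\operatorname{tr}(M)I$; $\operatorname{sym}M$ is the symmetric part; $(\operatorname{vskw}M)_i:=-\tfrac12\epsilon_{ijk}M_{jk}$ (Levi-Civita symbol, summation convention). Differential operators act column-wise on matrix fields: $(\operatorname{curl}M)_{ij}=\epsilon_{ikl}\partial_kM_{lj}$, $(\operatorname{div}M)_i=\partial_jM_{ji}$; for a vector field $v$, $(\operatorname{grad}v)_{ij}=\partial_iv_j$, $\operatorname{def}v:=\operatorname{sym}\operatorname{grad}v$; for a scalar $u$, $\operatorname{hess}u$ is the Hessian; $\operatorname{div}\operatorname{div}\sigma:=\operatorname{div}(\operatorname{div}\sigma)$;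 $\operatorname{inc}M:=\operatorname{curl}\big((\operatorname{curl}M)^\top\big)$. Subscript $t$ denotes time derivative. *)

theory Defs
  imports "HOL-Analysis.Analysis"
begin

type_synonym mat3 = "real^3^3"
type_synonym vec3 = "real^3"

definition eps :: "3 \<Rightarrow> 3 \<Rightarrow> 3 \<Rightarrow> real" where
  "eps i j k =
     (if (i,j,k) \<in> {(1,2,3),(2,3,1),(3,1,2)} then 1
      else if (i,j,k) \<in> {(1,3,2),(3,2,1),(2,1,3)} then -1 else 0)"

definition pd :: "'a::real_normed_vector \<Rightarrow> ('a \<Rightarrow> 'b::real_normed_vector) \<Rightarrow> 'a \<Rightarrow> 'b" where
  "pd v f z = vector_derivative (\<lambda>h. f (z + h *\<^sub>R v)) (at 0)"

fun iterpd :: "'a::real_normed_vector list \<Rightarrow> ('a \<Rightarrow> 'b::real_normed_vector) \<Rightarrow> 'a \<Rightarrow> 'b" where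
  "iterpd [] f = f"
| "iterpd (v # vs) f = pd v (iterpd vs f)"

definition smooth_on :: "'a::euclidean_space set \<Rightarrow> ('a \<Rightarrow> 'b::real_normed_vector) \<Rightarrow> bool" where
  "smooth_on U f \<longleftrightarrow>
     (\<forall>vs. set vs \<subseteq> Basis \<longrightarrow>
        continuous_on U (iterpd vs f) \<and>
        (\<forall>v\<in>Basis. \<forall>z\<in>U. (\<lambda>h. iterpd vs f (z + h *\<^sub>R v)) differentiable (at 0)))"

definition dx :: "3 \<Rightarrow> (vec3 \<Rightarrow> 'b::real_normed_vector) \<Rightarrow> vec3 \<Rightarrow> 'b" where
  "dx k F x = vector_derivative (\<lambda>h. F (x + h *\<^sub>R axis k 1)) (at 0)"

definition dt :: "real \<Rightarrow> (real \<Rightarrow> vec3 \<Rightarrow> 'b::real_normed_vector) \<Rightarrow> real \<Rightarrow> vec3 \<Rightarrow> 'b" where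
  "dt T F t x = vector_derivative (\<lambda>s. F s x) (at t within {0..T})"

definition Smap :: "mat3 \<Rightarrow> mat3" where
  "Smap M = transpose M - trace M *\<^sub>R mat 1"

definition symm :: "mat3 \<Rightarrow> mat3" where
  "symm M = (1/2) *\<^sub>R (M + transpose M)"

definition vskw :: "mat3 \<Rightarrow> vec3" where
  "vskw M = (\<chi> i. - (1/2) * (\<Sum>j\<in>UNIV. \<Sum>k\<in>UNIV. eps i j k * M $ j $ k))"

definition curl :: "(vec3 \<Rightarrow> mat3) \<Rightarrow> vec3 \<Rightarrow> mat3" where
  "curl M x = (\<chi> i j. \<Sum>k\<in>UNIV. \<Sum>l\<in>UNIV. eps i k l * dx k (\<lambda>y. M y $ l $ j) x)"

definition divm :: "(vec3 \<Rightarrow> mat3) \<Rightarrow> vec3 \<Rightarrow> vec3" where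
  "divm M x = (\<chi> i. \<Sum>j\<in>UNIV. dx j (\<lambda>y. M y $ j $ i) x)"

definition divv :: "(vec3 \<Rightarrow> vec3) \<Rightarrow> vec3 \<Rightarrow> real" where
  "divv v x = (\<Sum>i\<in>UNIV. dx i (\<lambda>y. v y $ i) x)"

definition grad :: "(vec3 \<Rightarrow> vec3) \<Rightarrow> vec3 \<Rightarrow> mat3" where
  "grad v x = (\<chi> i j. dx i (\<lambda>y. v y $ j) x)"

definition defo :: "(vec3 \<Rightarrow> vec3) \<Rightarrow> vec3 \<Rightarrow> mat3" where
  "defo v x = symm (grad v x)"

definition hess :: "(vec3 \<Rightarrow> real) \<Rightarrow> vec3 \<Rightarrow> mat3" where
  "hess u x = (\<chi> i j. dx i (dx j u) x)"

definition divdiv :: "(vec3 \<Rightarrow> mat3) \<Rightarrow> vec3 \<Rightarrow> real" where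
  "divdiv M x = divv (divm M) x"

definition inc :: "(vec3 \<Rightarrow> mat3) \<Rightarrow> vec3 \<Rightarrow> mat3" where
  "inc M = curl (\<lambda>y. transpose (curl M y))"

end

theory Submission
  imports Defs
begin



lemma line_shift:
  fixes g :: "'a::real_normed_vector \<Rightarrow> 'b::real_normed_vector"
  assumes "((\<lambda>h. g (q + h *\<^sub>R u)) has_vector_derivative D) (at 0)"
    and "q = p + r0 *\<^sub>R u"
  shows "((\<lambda>r. g (p + r *\<^sub>R u)) has_vector_derivative D) (at r0)"
proof -
  have d1: "((\<lambda>r. r - r0) has_vector_derivative 1) (at r0)"
    by (auto intro!: derivative_eq_intros)
  have "((\<lambda>h. g (q + h *\<^sub>R u)) \<circ> (\<lambda>r. r - r0) has_vector_derivative 1 *\<^sub>R D) (at r0)"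
    by (rule vector_diff_chain_at[OF d1]) (simp add: assms(1))
  moreover have "((\<lambda>h. g (q + h *\<^sub>R u)) \<circ> (\<lambda>r. r - r0)) = (\<lambda>r. g (p + r *\<^sub>R u))"
    by (auto simp: assms(2) algebra_simps fun_eq_iff)
  ultimately show ?thesis by simp
qed

lemma schwarz:
  fixes f :: "'a::euclidean_space \<Rightarrow> 'b::banach"
  assumes U: "open U" "z \<in> U"
  and fv: "\<And>y. y \<in> U \<Longrightarrow> ((\<lambda>h. f (y + h *\<^sub>R v)) has_vector_derivative fv y) (at 0)"
  and fw: "\<And>y. y \<in> U \<Longrightarrow> ((\<lambda>h. f (y + h *\<^sub>R w)) has_vector_derivative fw y) (at 0)"
  and fwv: "\<And>y. y \<in> U \<Longrightarrow> ((\<lambda>h. fw (y + h *\<^sub>R v)) has_vector_derivative fwv y) (at 0)"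
  and cfw: "continuous_on U fw" and cfwv: "continuous_on U fwv"
  and fvw: "((\<lambda>h. fv (z + h *\<^sub>R w)) has_vector_derivative D) (at 0)"
  shows "D = fwv z"
proof -
  obtain e where e: "e > 0" "ball z e \<subseteq> U" using U openE by blast
  define \<delta> where "\<delta> = e / (2 * (norm v + norm w + 1))"
  have dpos: "\<delta> > 0" unfolding \<delta>_def using e by (simp add: add_nonneg_pos)
  have inU: "z + s *\<^sub>R v + r *\<^sub>R w \<in> U" if "\<bar>s\<bar> \<le> \<delta>" "\<bar>r\<bar> \<le> \<delta>" for s r
  proof -
    have "norm (s *\<^sub>R v + r *\<^sub>R w) \<le> \<bar>s\<bar> * norm v + \<bar>r\<bar> * norm w"
      by (metis norm_scaleR norm_triangle_ineq order.trans order_refl add_mono)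
    also have "\<dots> \<le> \<delta> * norm v + \<delta> * norm w"
      using that by (intro add_mono mult_right_mono) auto
    also have "\<dots> < e"
    proof -
      have pp: "norm v + norm w + 1 > 0" by (simp add: add_nonneg_pos)
      have "\<delta> * (norm v + norm w + 1) = e / 2" unfolding \<delta>_def
        using pp by (simp add: field_simps)
      hence "\<delta> * norm v + \<delta> * norm w + \<delta> = e / 2" by (simp add: algebra_simps)
      thus ?thesis using e dpos by linarith
    qed
    finally have N: "norm (s *\<^sub>R v + r *\<^sub>R w) < e" .
    have "dist z (z + s *\<^sub>R v + r *\<^sub>R w) = norm (s *\<^sub>R v + r *\<^sub>R w)"
      by (simp add: dist_norm norm_minus_commute add.assoc add.commute)
    hence "dist z (z + s *\<^sub>R v + r *\<^sub>R w) < e" using N by simp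
    hence "z + s *\<^sub>R v + r *\<^sub>R w \<in> ball z e" by simp
    thus ?thesis using e by blast
  qed
  have A: "integral {-\<delta>..u} (\<lambda>r. fw (z + s *\<^sub>R v + r *\<^sub>R w))
           = f (z + s *\<^sub>R v + u *\<^sub>R w) - f (z + s *\<^sub>R v + (-\<delta>) *\<^sub>R w)"
    if "\<bar>s\<bar> \<le> \<delta>" "\<bar>u\<bar> \<le> \<delta>" for s u
  proof -
    have "((\<lambda>r. fw (z + s *\<^sub>R v + r *\<^sub>R w)) has_integral
           f (z + s *\<^sub>R v + u *\<^sub>R w) - f (z + s *\<^sub>R v + (-\<delta>) *\<^sub>R w)) {-\<delta>..u}"
    proof (rule fundamental_theorem_of_calculus[where f = "\<lambda>r. f (z + s *\<^sub>R v + r *\<^sub>R w)"])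
      show "-\<delta> \<le> u" using that by auto
      fix r assume r: "r \<in> {-\<delta>..u}"
      hence "\<bar>r\<bar> \<le> \<delta>" using that by auto
      hence "z + s *\<^sub>R v + r *\<^sub>R w \<in> U" using inU that by auto
      from line_shift[OF fw[OF this] refl]
      show "((\<lambda>r. f (z + s *\<^sub>R v + r *\<^sub>R w)) has_vector_derivative fw (z + s *\<^sub>R v + r *\<^sub>R w))
             (at r within {-\<delta>..u})" by (rule has_vector_derivative_at_within)
    qed
    thus ?thesis by (rule integral_unique)
  qed
  have B: "fv (z + u *\<^sub>R w) - fv (z + (-\<delta>) *\<^sub>R w) = integral {-\<delta>..u} (\<lambda>r. fwv (z + r *\<^sub>R w))"
    if u: "\<bar>u\<bar> \<le> \<delta>" for u
  proof -
    let ?I = "{-\<delta><..<\<delta>}"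
    have L: "((\<lambda>s. integral (cbox (-\<delta>) u) (\<lambda>r. fw (z + s *\<^sub>R v + r *\<^sub>R w)))
              has_vector_derivative integral (cbox (-\<delta>) u) (\<lambda>r. fwv (z + 0 *\<^sub>R v + r *\<^sub>R w)))
             (at 0 within ?I)"
    proof (rule leibniz_rule_vector_derivative[where f = "\<lambda>s r. fw (z + s *\<^sub>R v + r *\<^sub>R w)"
            and fx = "\<lambda>s r. fwv (z + s *\<^sub>R v + r *\<^sub>R w)"])
      fix s r assume s: "s \<in> ?I" and r: "r \<in> cbox (-\<delta>) u"
      have sr: "\<bar>s\<bar> \<le> \<delta>" "\<bar>r\<bar> \<le> \<delta>" using s r u by auto
      have "((\<lambda>s. fw (z + s *\<^sub>R v + r *\<^sub>R w)) has_vector_derivative fwv (z + s *\<^sub>R v + r *\<^sub>R w)) (at s)"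
      proof -
        have "((\<lambda>s. fw ((z + r *\<^sub>R w) + s *\<^sub>R v)) has_vector_derivative fwv (z + s *\<^sub>R v + r *\<^sub>R w)) (at s)"
          by (rule line_shift[OF fwv[OF inU[OF sr]]]) (simp add: algebra_simps)
        thus ?thesis by (simp add: algebra_simps)
      qed
      thus "((\<lambda>s. fw (z + s *\<^sub>R v + r *\<^sub>R w)) has_vector_derivative fwv (z + s *\<^sub>R v + r *\<^sub>R w)) (at s within ?I)"
        by (rule has_vector_derivative_at_within)
    next
      fix s assume s: "s \<in> ?I"
      show "(\<lambda>r. fw (z + s *\<^sub>R v + r *\<^sub>R w)) integrable_on cbox (-\<delta>) u"
        unfolding cbox_interval
      proof (rule integrable_continuous_interval, rule continuous_on_compose2[OF cfw])
        show "continuous_on {-\<delta>..u} (\<lambda>r. z + s *\<^sub>R v + r *\<^sub>R w)" by (intro continuous_intros)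
        show "(\<lambda>r. z + s *\<^sub>R v + r *\<^sub>R w) ` {-\<delta>..u} \<subseteq> U" using inU s u by auto
      qed
    next
      have "continuous_on (?I \<times> cbox (-\<delta>) u) (\<lambda>p. fwv (z + fst p *\<^sub>R v + snd p *\<^sub>R w))"
      proof (rule continuous_on_compose2[OF cfwv])
        show "continuous_on (?I \<times> cbox (-\<delta>) u) (\<lambda>p. z + fst p *\<^sub>R v + snd p *\<^sub>R w)"
          by (auto intro!: continuous_intros)
        show "(\<lambda>p. z + fst p *\<^sub>R v + snd p *\<^sub>R w) ` (?I \<times> cbox (-\<delta>) u) \<subseteq> U"
        proof clarify
          fix s r assume "s \<in> ?I" "r \<in> cbox (-\<delta>) u"
          hence "\<bar>s\<bar> \<le> \<delta>" "\<bar>r\<bar> \<le> \<delta>" using u by (auto simp: cbox_interval)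
          thus "z + fst (s, r) *\<^sub>R v + snd (s, r) *\<^sub>R w \<in> U" using inU by simp
        qed
      qed
      thus "continuous_on (?I \<times> cbox (-\<delta>) u) (\<lambda>(s, r). fwv (z + s *\<^sub>R v + r *\<^sub>R w))"
        by (simp add: split_def)
    next
      show "0 \<in> ?I" using dpos by simp
    next
      show "convex ?I" by (rule convex_real_interval)
    qed
    hence L': "((\<lambda>s. integral {-\<delta>..u} (\<lambda>r. fw (z + s *\<^sub>R v + r *\<^sub>R w)))
              has_vector_derivative integral {-\<delta>..u} (\<lambda>r. fwv (z + r *\<^sub>R w))) (at 0)"
    proof -
      have "((\<lambda>s. integral {-\<delta>..u} (\<lambda>r. fw (z + s *\<^sub>R v + r *\<^sub>R w)))
              has_vector_derivative integral {-\<delta>..u} (\<lambda>r. fwv (z + r *\<^sub>R w))) (at 0 within ?I)"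
        using L unfolding cbox_interval by simp
      thus ?thesis using dpos by (subst (asm) has_vector_derivative_within_open) auto
    qed
    have R: "((\<lambda>s. f (z + s *\<^sub>R v + u *\<^sub>R w) - f (z + s *\<^sub>R v + (-\<delta>) *\<^sub>R w))
              has_vector_derivative fv (z + u *\<^sub>R w) - fv (z + (-\<delta>) *\<^sub>R w)) (at 0)"
    proof (rule has_vector_derivative_diff)
      show "((\<lambda>s. f (z + s *\<^sub>R v + u *\<^sub>R w)) has_vector_derivative fv (z + u *\<^sub>R w)) (at 0)"
        using line_shift[OF fv[OF inU[of 0 u]], of "z + u *\<^sub>R w" 0] u dpos
        by (simp add: algebra_simps)
      show "((\<lambda>s. f (z + s *\<^sub>R v + (-\<delta>) *\<^sub>R w)) has_vector_derivative fv (z + (-\<delta>) *\<^sub>R w)) (at 0)"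
        using line_shift[OF fv[OF inU[of 0 "-\<delta>"]], of "z + (-\<delta>) *\<^sub>R w" 0] dpos
        by (simp add: algebra_simps)
    qed
    have R': "((\<lambda>s. integral {-\<delta>..u} (\<lambda>r. fw (z + s *\<^sub>R v + r *\<^sub>R w)))
              has_vector_derivative fv (z + u *\<^sub>R w) - fv (z + (-\<delta>) *\<^sub>R w)) (at 0)"
    proof (rule has_vector_derivative_transform_within_open[OF R, of ?I])
      fix s assume "s \<in> ?I"
      thus "f (z + s *\<^sub>R v + u *\<^sub>R w) - f (z + s *\<^sub>R v + (-\<delta>) *\<^sub>R w) =
            integral {-\<delta>..u} (\<lambda>r. fw (z + s *\<^sub>R v + r *\<^sub>R w))" using A[of s u] u by auto
    qed (use dpos in auto)
    show ?thesis using vector_derivative_unique_at[OF R' L'] .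
  qed
  have cint: "continuous_on {-\<delta>..\<delta>} (\<lambda>r. fwv (z + r *\<^sub>R w))"
  proof (rule continuous_on_compose2[OF cfwv])
    show "continuous_on {-\<delta>..\<delta>} (\<lambda>r. z + r *\<^sub>R w)" by (intro continuous_intros)
    show "(\<lambda>r. z + r *\<^sub>R w) ` {-\<delta>..\<delta>} \<subseteq> U" using inU[of 0] by auto
  qed
  have "((\<lambda>u. integral {-\<delta>..u} (\<lambda>r. fwv (z + r *\<^sub>R w))) has_vector_derivative fwv (z + 0 *\<^sub>R w))
          (at 0 within {-\<delta>..\<delta>})"
    by (rule integral_has_vector_derivative[OF cint]) (use dpos in auto)
  hence "((\<lambda>u. integral {-\<delta>..u} (\<lambda>r. fwv (z + r *\<^sub>R w))) has_vector_derivative fwv z)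
          (at 0 within {-\<delta>..\<delta>})" by simp
  hence "((\<lambda>u. integral {-\<delta>..u} (\<lambda>r. fwv (z + r *\<^sub>R w))) has_vector_derivative fwv z)
          (at 0 within {-\<delta><..<\<delta>})"
    by (rule has_vector_derivative_within_subset) auto
  hence C1: "((\<lambda>u. integral {-\<delta>..u} (\<lambda>r. fwv (z + r *\<^sub>R w))) has_vector_derivative fwv z) (at 0)"
    using dpos by (subst (asm) has_vector_derivative_within_open) auto
  have C2: "((\<lambda>u. fv (z + (-\<delta>) *\<^sub>R w) + integral {-\<delta>..u} (\<lambda>r. fwv (z + r *\<^sub>R w)))
            has_vector_derivative fwv z) (at 0)"
    using has_vector_derivative_add[OF has_vector_derivative_const C1] by simp
  have C3: "((\<lambda>h. fv (z + h *\<^sub>R w)) has_vector_derivative fwv z) (at 0)"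
  proof (rule has_vector_derivative_transform_within_open[OF C2, of "{-\<delta><..<\<delta>}"])
    fix u assume "u \<in> {-\<delta><..<\<delta>}"
    thus "fv (z + (-\<delta>) *\<^sub>R w) + integral {-\<delta>..u} (\<lambda>r. fwv (z + r *\<^sub>R w)) = fv (z + u *\<^sub>R w)"
      using B[of u] by (auto simp: algebra_simps)
  qed (use dpos in auto)
  show ?thesis using vector_derivative_unique_at[OF fvw C3] .
qed



lemma eps_vals:
  "eps 1 2 3 = 1" "eps 2 3 1 = 1" "eps 3 1 2 = 1"
  "eps 1 3 2 = -1" "eps 3 2 1 = -1" "eps 2 1 3 = -1"
  "eps 1 1 k = 0" "eps 2 2 k = 0" "eps 3 3 k = 0"
  "eps i 1 1 = 0" "eps i 2 2 = 0" "eps i 3 3 = 0"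
  "eps 1 k 1 = 0" "eps 2 k 2 = 0" "eps 3 k 3 = 0"
  by (auto simp: eps_def)


definition Sinv :: "mat3 \<Rightarrow> mat3" where
  "Sinv M = transpose M - ((1/2) * trace M) *\<^sub>R mat 1"

lemma Sinv_Smap: "Sinv (Smap M) = M"
  unfolding Sinv_def Smap_def
  by (simp add: vec_eq_iff trace_def transpose_def mat_def sum_3 forall_3 algebra_simps)



lemma final_alg:
  fixes D :: "3 \<Rightarrow> 3 \<Rightarrow> mat3"
  assumes s1: "\<And>m k. D m k = D k m"
    and s2: "\<And>m k. transpose (D m k) = D m k"
    and dd: "(\<Sum>i\<in>UNIV. \<Sum>j\<in>UNIV. Smap (D i j) $ j $ i) = 0"
  shows "Sinv (symm (\<chi> i j. \<Sum>k\<in>UNIV. \<Sum>l\<in>UNIV. eps i k l *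
            (- (\<chi> l j. \<Sum>k'\<in>UNIV. \<Sum>l'\<in>UNIV. eps l k' l' * Smap (D k k') $ l' $ j)) $ l $ j))
         + Smap (\<chi> i j. \<Sum>k\<in>UNIV. \<Sum>l\<in>UNIV. eps i k l *
                 (\<Sum>k'\<in>UNIV. \<Sum>l'\<in>UNIV. eps j k' l' * D k k' $ l' $ l))
         - 2 *\<^sub>R symm (\<chi> i j. (1/2) * (\<Sum>j'\<in>UNIV. Smap (D i j') $ j' $ j))
         - 2 *\<^sub>R (\<chi> i j. (1/2) * trace (D i j)) = 0"
proof -
  have e: "\<And>m k a b. D m k $ a $ b = D m k $ b $ a"
  proof -
    fix m k a b
    show "D m k $ a $ b = D m k $ b $ a"
      using arg_cong[OF s2[of m k], of "\<lambda>M. M $ b $ a"] by (simp add: transpose_def)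
  qed
  have r1: "D 2 1 = D 1 2" "D 3 1 = D 1 3" "D 3 2 = D 2 3" using s1 by auto
  have r2: "\<And>m k. D m k $ 2 $ 1 = D m k $ 1 $ 2" "\<And>m k. D m k $ 3 $ 1 = D m k $ 1 $ 3"
    "\<And>m k. D m k $ 3 $ 2 = D m k $ 2 $ 3" using e by auto
  have dd': "(\<Sum>i\<in>UNIV. \<Sum>j\<in>UNIV. Smap (D i j) $ j $ i) = 0" by (rule dd)
  note dd2 = dd'[unfolded Smap_def trace_def transpose_def mat_def, simplified sum_3 r1 r2]
  show ?thesis
    unfolding Sinv_def Smap_def symm_def trace_def transpose_def mat_def
    apply (simp add: vec_eq_iff forall_3 sum_3 eps_vals r1 r2)
    using dd2 apply (simp add: sum_3 r1 r2 field_simps)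
    done
qed




lemma smooth_d0:
  assumes "smooth_on U f" "z \<in> U" "v \<in> Basis"
  shows "((\<lambda>h. f (z + h *\<^sub>R v)) has_vector_derivative pd v f z) (at 0)"
proof -
  have H: "\<forall>vs. set vs \<subseteq> Basis \<longrightarrow> (\<forall>v\<in>Basis. \<forall>z\<in>U. (\<lambda>h. iterpd vs f (z + h *\<^sub>R v)) differentiable (at 0))"
    using assms(1) unfolding smooth_on_def by blast
  have "(\<lambda>h. iterpd [] f (z + h *\<^sub>R v)) differentiable (at 0)"
    using H[rule_format, of "[]" v z] assms by simp
  thus ?thesis by (simp add: vector_derivative_works pd_def[of v f z])
qed

lemma smooth_d1:
  assumes "smooth_on U f" "z \<in> U" "v \<in> Basis" "w \<in> Basis"
  shows "((\<lambda>h. pd w f (z + h *\<^sub>R v)) has_vector_derivative pd v (pd w f) z) (at 0)"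
proof -
  have "set [w] \<subseteq> Basis" using assms by simp
  have H: "\<forall>vs. set vs \<subseteq> Basis \<longrightarrow> (\<forall>v\<in>Basis. \<forall>z\<in>U. (\<lambda>h. iterpd vs f (z + h *\<^sub>R v)) differentiable (at 0))"
    using assms(1) unfolding smooth_on_def by blast
  have "(\<lambda>h. iterpd [w] f (z + h *\<^sub>R v)) differentiable (at 0)"
    using H[rule_format, of "[w]" v z] assms by simp
  thus ?thesis by (simp add: vector_derivative_works pd_def[of v "pd w f" z])
qed

lemma smooth_c1:
  assumes "smooth_on U f" "w \<in> Basis"
  shows "continuous_on U (pd w f)"
proof -
  have "set [w] \<subseteq> Basis" using assms by simp
  thus ?thesis using assms unfolding smooth_on_def by (metis iterpd.simps)
qed

lemma smooth_c2:
  assumes "smooth_on U f" "v \<in> Basis" "w \<in> Basis"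
  shows "continuous_on U (pd v (pd w f))"
proof -
  have "set [v, w] \<subseteq> Basis" using assms by simp
  thus ?thesis using assms unfolding smooth_on_def by (metis iterpd.simps)
qed

lemma smooth_swap:
  fixes f :: "'a::euclidean_space \<Rightarrow> 'b::banach"
  assumes "open U" "smooth_on U f" "z \<in> U" "v \<in> Basis" "w \<in> Basis"
  shows "pd v (pd w f) z = pd w (pd v f) z"
proof -
  have "pd w (pd v f) z = pd v (pd w f) z"
  proof (rule schwarz[where U=U and f=f and v=v and w=w and fv="pd v f" and fw="pd w f"])
    show "open U" "z \<in> U" by fact+
    show "\<And>y. y \<in> U \<Longrightarrow> ((\<lambda>h. f (y + h *\<^sub>R v)) has_vector_derivative pd v f y) (at 0)"
      using smooth_d0 assms by blast
    show "\<And>y. y \<in> U \<Longrightarrow> ((\<lambda>h. f (y + h *\<^sub>R w)) has_vector_derivative pd w f y) (at 0)"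
      using smooth_d0 assms by blast
    show "\<And>y. y \<in> U \<Longrightarrow> ((\<lambda>h. pd w f (y + h *\<^sub>R v)) has_vector_derivative pd v (pd w f) y) (at 0)"
      using smooth_d1 assms by blast
    show "continuous_on U (pd w f)" using smooth_c1 assms by blast
    show "continuous_on U (pd v (pd w f))" using smooth_c2 assms by blast
    show "((\<lambda>h. pd v f (z + h *\<^sub>R w)) has_vector_derivative pd w (pd v f) z) (at 0)"
      using smooth_d1 assms by blast
  qed
  thus ?thesis by simp
qed

lemma mat_decomp: "(M::mat3) = (\<Sum>i\<in>UNIV. \<Sum>j\<in>UNIV. (M $ i $ j) *\<^sub>R axis i (axis j 1))"
  by (simp add: vec_eq_iff sum_3 forall_3 axis_def)

lemma hvd_mat:
  fixes F :: "real \<Rightarrow> mat3"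
  assumes "\<And>i j. ((\<lambda>h. F h $ i $ j) has_vector_derivative D $ i $ j) net"
  shows "(F has_vector_derivative D) net"
proof -
  have "((\<lambda>h. \<Sum>i\<in>UNIV. \<Sum>j\<in>UNIV. (F h $ i $ j) *\<^sub>R axis i (axis j (1::real)))
        has_vector_derivative (\<Sum>i\<in>UNIV. \<Sum>j\<in>UNIV. (D $ i $ j) *\<^sub>R axis i (axis j 1))) net"
    by (intro has_vector_derivative_sum bounded_linear.has_vector_derivative[OF bounded_linear_scaleR_left] assms)
  moreover have "F = (\<lambda>h. \<Sum>i\<in>UNIV. \<Sum>j\<in>UNIV. (F h $ i $ j) *\<^sub>R axis i (axis j (1::real)))"
    by (rule ext) (rule mat_decomp)
  moreover have "D = (\<Sum>i\<in>UNIV. \<Sum>j\<in>UNIV. (D $ i $ j) *\<^sub>R axis i (axis j 1))"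
    by (rule mat_decomp)
  ultimately show ?thesis by simp
qed

lemma dx_local:
  assumes "open S" "y \<in> S" "\<And>y'. y' \<in> S \<Longrightarrow> F y' = F' y'"
    and "((\<lambda>h. F' (y + h *\<^sub>R axis k 1)) has_vector_derivative D) (at 0)"
  shows "dx k F y = D"
proof -
  let ?P = "(\<lambda>h::real. y + h *\<^sub>R axis k 1) -` S"
  have "open ?P" by (rule open_vimage) (auto intro!: continuous_intros simp: assms)
  moreover have "0 \<in> ?P" using assms by simp
  ultimately have "((\<lambda>h. F (y + h *\<^sub>R axis k 1)) has_vector_derivative D) (at 0)"
    using assms by (intro has_vector_derivative_transform_within_open[OF assms(4), of ?P]) auto
  thus ?thesis unfolding dx_def by (rule vector_derivative_at)
qed

lemma dx_lin:
  assumes "((\<lambda>h. H (y + h *\<^sub>R axis k 1)) has_vector_derivative D) (at 0)" "bounded_linear L"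
  shows "dx k (\<lambda>y. L (H y)) y = L D"
  unfolding dx_def
  by (rule vector_derivative_at, rule bounded_linear.has_vector_derivative[OF assms(2) assms(1)])

lemma bl_entry: "bounded_linear (\<lambda>M::mat3. M $ a $ b)"
  by (simp add: linear_conv_bounded_linear[symmetric] linear_iff)

lemma bl_Smap_entry: "bounded_linear (\<lambda>M::mat3. Smap M $ a $ b)"
  by (simp add: linear_conv_bounded_linear[symmetric] linear_iff Smap_def trace_def transpose_def mat_def sum_distrib_left
      sum.distrib scaleR_sum_right algebra_simps)

lemma bl_trace: "bounded_linear (\<lambda>M::mat3. c * trace M)"
  by (simp add: linear_conv_bounded_linear[symmetric] linear_iff trace_def
      sum.distrib sum_distrib_left algebra_simps)

lemma bl_transpose: "bounded_linear (transpose :: mat3 \<Rightarrow> mat3)"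
  by (simp add: linear_conv_bounded_linear[symmetric] linear_iff transpose_def vec_eq_iff)

lemma bl_Sinv_symm: "bounded_linear (\<lambda>M::mat3. Sinv (symm M))"
  by (simp add: linear_conv_bounded_linear[symmetric] linear_iff Sinv_def symm_def trace_def
      transpose_def vec_eq_iff mat_def sum.distrib sum_distrib_left algebra_simps
      add_divide_distrib sum_divide_distrib[symmetric])

lemma hvd_entry: fixes f :: "real \<Rightarrow> mat3" shows "(f has_vector_derivative D) net \<Longrightarrow> ((\<lambda>h. f h $ a $ b) has_vector_derivative D $ a $ b) net"
  by (rule bounded_linear.has_vector_derivative[OF bl_entry])

lemma hvd_Smap_entry: fixes f :: "real \<Rightarrow> mat3" shows "(f has_vector_derivative D) net \<Longrightarrow> ((\<lambda>h. Smap (f h) $ a $ b) has_vector_derivative Smap D $ a $ b) net"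
  by (rule bounded_linear.has_vector_derivative[OF bl_Smap_entry])

lemma hvd_trace: fixes f :: "real \<Rightarrow> mat3" shows "(f has_vector_derivative D) net \<Longrightarrow> ((\<lambda>h. c * trace (f h)) has_vector_derivative c * trace D) net"
  by (rule bounded_linear.has_vector_derivative[OF bl_trace])


theorem lemma2p4:
  fixes \<Omega> :: "vec3 set" and U :: "(real \<times> vec3) set" and T :: real
    and A \<gamma> :: "real \<Rightarrow> vec3 \<Rightarrow> mat3"
    and \<alpha> :: "real \<Rightarrow> vec3 \<Rightarrow> real" and \<beta> :: "real \<Rightarrow> vec3 \<Rightarrow> vec3"
  assumes "open \<Omega>" and "T > 0"
    and "open U" and "{0..T} \<times> \<Omega> \<subseteq> U"
    and "smooth_on U (\<lambda>(t, x). A t x)" and "smooth_on U (\<lambda>(t, x). \<gamma> t x)"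
    and "\<And>t x. t \<in> {0..T} \<Longrightarrow> x \<in> \<Omega> \<Longrightarrow> trace (A t x) = 0"
    and "\<And>t x. t \<in> {0..T} \<Longrightarrow> x \<in> \<Omega> \<Longrightarrow> transpose (\<gamma> t x) = \<gamma> t x"
    and "\<And>t x. t \<in> {0..T} \<Longrightarrow> x \<in> \<Omega> \<Longrightarrow> divm (A t) x = 0"
    and "\<And>t x. t \<in> {0..T} \<Longrightarrow> x \<in> \<Omega> \<Longrightarrow>
           dt T A t x + curl (\<lambda>y. Smap (\<gamma> t y)) x = 0"
    and "\<And>t x. t \<in> {0..T} \<Longrightarrow> x \<in> \<Omega> \<Longrightarrow>
           Smap (dt T \<gamma> t x) - symm (curl (A t) x) = 0"
    and "\<And>t x. t \<in> {0..T} \<Longrightarrow> x \<in> \<Omega> \<Longrightarrow> divdiv (\<lambda>y. Smap (\<gamma> t y)) x = 0"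
    and "\<And>t x. \<alpha> t x = (1/2) * trace (\<gamma> t x)"
    and "\<And>t x. \<beta> t x = (1/2) *\<^sub>R integral {0..t} (\<lambda>s. divm (\<lambda>y. Smap (\<gamma> s y)) x)
                         + vskw (A 0 x)"
  shows "\<forall>t\<in>{0..T}. \<forall>x\<in>\<Omega>.
           dt T (dt T \<gamma>) t x + Smap (inc (\<gamma> t) x) - 2 *\<^sub>R defo (\<lambda>y. dt T \<beta> t y) x
             - 2 *\<^sub>R hess (\<alpha> t) x = 0"
proof (intro ballI)
  fix t x assume t: "t \<in> {0..T}" and x: "x \<in> \<Omega>"
  note asm = assms
  define G where "G = (\<lambda>(t::real, x::vec3). \<gamma> t x)"
  define AA where "AA = (\<lambda>(t::real, x::vec3). A t x)"
  define ek :: "3 \<Rightarrow> real \<times> vec3" where "ek k = (0, axis k 1)" for k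
  define e0 :: "real \<times> vec3" where "e0 = (1, 0)"
  have ekB: "ek k \<in> Basis" for k unfolding ek_def by (simp add: in_Basis_prod_iff)
  have e0B: "e0 \<in> Basis" unfolding e0_def by (simp add: in_Basis_prod_iff)
  have sG: "smooth_on U G" using assms(6) unfolding G_def .
  have sA: "smooth_on U AA" using assms(5) unfolding AA_def .
  have inU: "(s, y) \<in> U" if "s \<in> {0..T}" "y \<in> \<Omega>" for s y using assms(4) that by blast
  have lk: "(s, y) + h *\<^sub>R ek k = (s, y + h *\<^sub>R axis k 1)" for s y h k
    unfolding ek_def by simp
  have l0: "(s, y) + h *\<^sub>R e0 = (s + h, y)" for s y h
    unfolding e0_def by simp
  have gG0: "((\<lambda>h. \<gamma> s (y + h *\<^sub>R axis k 1)) has_vector_derivative pd (ek k) G (s, y)) (at 0)"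
    if "(s, y) \<in> U" for s y k
    using smooth_d0[OF sG that ekB] unfolding lk by (simp add: G_def)
  have gG1: "((\<lambda>h. pd (ek k) G (s, y + h *\<^sub>R axis m 1)) has_vector_derivative
              pd (ek m) (pd (ek k) G) (s, y)) (at 0)"
    if "(s, y) \<in> U" for s y k m
    using smooth_d1[OF sG that ekB ekB] unfolding lk .
  have gA0: "((\<lambda>h. A s (y + h *\<^sub>R axis k 1)) has_vector_derivative pd (ek k) AA (s, y)) (at 0)"
    if "(s, y) \<in> U" for s y k
    using smooth_d0[OF sA that ekB] unfolding lk by (simp add: AA_def)
  have tA0: "((\<lambda>r. A r y) has_vector_derivative pd e0 AA (s, y)) (at s)"
    if "(s, y) \<in> U" for s y
  proof -
    have "((\<lambda>r. AA ((0, y) + r *\<^sub>R e0)) has_vector_derivative pd e0 AA (s, y)) (at s)"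
      by (rule line_shift[OF smooth_d0[OF sA that e0B]]) (simp add: e0_def)
    thus ?thesis by (simp add: AA_def e0_def)
  qed
  have tA1: "((\<lambda>r. pd (ek k) AA (r, y)) has_vector_derivative pd e0 (pd (ek k) AA) (s, y)) (at s)"
    if "(s, y) \<in> U" for s y k
  proof -
    have "((\<lambda>r. pd (ek k) AA ((0, y) + r *\<^sub>R e0)) has_vector_derivative pd e0 (pd (ek k) AA) (s, y)) (at s)"
      by (rule line_shift[OF smooth_d1[OF sA that e0B ekB]]) (simp add: e0_def)
    thus ?thesis by (simp add: e0_def)
  qed
  have xU: "(t, x) \<in> U" using inU t x by blast
  have yU: "y \<in> \<Omega> \<Longrightarrow> (t, y) \<in> U" for y using inU t by blast
  define Gd where "Gd k y = pd (ek k) G (t, y)" for k y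
  define D where "D m k = pd (ek m) (pd (ek k) G) (t, x)" for m k
  have Dline: "((\<lambda>h. Gd k (x + h *\<^sub>R axis m 1)) has_vector_derivative D m k) (at 0)" for k m
    unfolding Gd_def D_def by (rule gG1[OF xU])
  have dG: "dx k (\<lambda>y. \<gamma> t y $ a $ b) y = Gd k y $ a $ b" if "y \<in> \<Omega>" for k a b y
    unfolding Gd_def by (rule dx_lin[OF gG0[OF yU[OF that]] bl_entry])
  have dGS: "dx k (\<lambda>y. Smap (\<gamma> t y) $ a $ b) y = Smap (Gd k y) $ a $ b" if "y \<in> \<Omega>" for k a b y
    unfolding Gd_def by (rule dx_lin[OF gG0[OF yU[OF that]] bl_Smap_entry])
  have dGT: "dx k (\<lambda>y. c * trace (\<gamma> t y)) y = c * trace (Gd k y)" if "y \<in> \<Omega>" for k c y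
    unfolding Gd_def by (rule dx_lin[OF gG0[OF yU[OF that]] bl_trace])
  have dGSs: "dx k (\<lambda>y. Smap (\<gamma> s y) $ a $ b) y = Smap (pd (ek k) G (s, y)) $ a $ b"
    if "s \<in> {0..T}" "y \<in> \<Omega>" for k a b y s
    by (rule dx_lin[OF gG0[OF inU[OF that]] bl_Smap_entry])
  have dA: "dx k (\<lambda>y. A s y $ a $ b) x = pd (ek k) AA (s, x) $ a $ b"
    if "s \<in> {0..T}" for k a b s
    by (rule dx_lin[OF gA0[OF inU[OF that x]] bl_entry])
  have aeq: "\<alpha> t = (\<lambda>y. (1/2) * trace (\<gamma> t y))" using assms(13) by (simp add: fun_eq_iff)
  have HE: "hess (\<alpha> t) x = (\<chi> i j. (1/2) * trace (D i j))"
  proof -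
    have "dx i (dx j (\<alpha> t)) x = (1/2) * trace (D i j)" for i j
    proof (rule dx_local[OF assms(1) x])
      show "dx j (\<alpha> t) y = (1/2) * trace (Gd j y)" if "y \<in> \<Omega>" for y
        unfolding aeq using dGT[OF that] .
      show "((\<lambda>h. (1/2) * trace (Gd j (x + h *\<^sub>R axis i 1))) has_vector_derivative (1/2) * trace (D i j)) (at 0)"
        by (rule hvd_trace[OF Dline])
    qed
    thus ?thesis unfolding hess_def by (simp add: vec_eq_iff)
  qed

  have INC: "inc (\<gamma> t) x = (\<chi> i j. \<Sum>k\<in>UNIV. \<Sum>l\<in>UNIV. eps i k l *
                 (\<Sum>k'\<in>UNIV. \<Sum>l'\<in>UNIV. eps j k' l' * D k k' $ l' $ l))"
  proof -
    have "dx k (\<lambda>y. transpose (curl (\<gamma> t) y) $ l $ j) x =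
          (\<Sum>k'\<in>UNIV. \<Sum>l'\<in>UNIV. eps j k' l' * D k k' $ l' $ l)" for k l j
    proof (rule dx_local[OF assms(1) x])
      show "transpose (curl (\<gamma> t) y) $ l $ j = (\<Sum>k'\<in>UNIV. \<Sum>l'\<in>UNIV. eps j k' l' * Gd k' y $ l' $ l)"
        if "y \<in> \<Omega>" for y
        unfolding transpose_def curl_def using dG[OF that] by simp
      show "((\<lambda>h. \<Sum>k'\<in>UNIV. \<Sum>l'\<in>UNIV. eps j k' l' * Gd k' (x + h *\<^sub>R axis k 1) $ l' $ l)
             has_vector_derivative (\<Sum>k'\<in>UNIV. \<Sum>l'\<in>UNIV. eps j k' l' * D k k' $ l' $ l)) (at 0)"
        by (intro has_vector_derivative_sum has_vector_derivative_mult_right hvd_entry Dline)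
    qed
    thus ?thesis unfolding inc_def curl_def[of "\<lambda>y. transpose (curl (\<gamma> t) y)"]
      by (simp add: vec_eq_iff)
  qed
  have DD: "(\<Sum>i\<in>UNIV. \<Sum>j\<in>UNIV. Smap (D i j) $ j $ i) = 0"
  proof -
    have "dx i (\<lambda>y. divm (\<lambda>y. Smap (\<gamma> t y)) y $ i) x = (\<Sum>j\<in>UNIV. Smap (D i j) $ j $ i)" for i
    proof (rule dx_local[OF assms(1) x])
      show "divm (\<lambda>y. Smap (\<gamma> t y)) y $ i = (\<Sum>j\<in>UNIV. Smap (Gd j y) $ j $ i)" if "y \<in> \<Omega>" for y
        unfolding divm_def using dGS[OF that] by simp
      show "((\<lambda>h. \<Sum>j\<in>UNIV. Smap (Gd j (x + h *\<^sub>R axis i 1)) $ j $ i)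
             has_vector_derivative (\<Sum>j\<in>UNIV. Smap (D i j) $ j $ i)) (at 0)"
        by (intro has_vector_derivative_sum hvd_Smap_entry Dline)
    qed
    moreover have "divdiv (\<lambda>y. Smap (\<gamma> t y)) x = 0" using assms(12) t x by blast
    ultimately show ?thesis unfolding divdiv_def divv_def by simp
  qed
  have dtb: "dt T \<beta> t y = (1/2) *\<^sub>R (\<chi> i. \<Sum>j\<in>UNIV. Smap (Gd j y) $ j $ i)" if y: "y \<in> \<Omega>" for y
  proof -
    define \<psi> where "\<psi> s = (\<chi> i. \<Sum>j\<in>UNIV. Smap (pd (ek j) G (s, y)) $ j $ i)" for s
    have cont: "continuous_on {0..T} \<psi>"
      unfolding \<psi>_def
    proof (intro continuous_on_vec_lambda continuous_on_sum bounded_linear.continuous_on[OF bl_Smap_entry])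
      fix j
      show "continuous_on {0..T} (\<lambda>s. pd (ek j) G (s, y))"
      proof (rule continuous_on_compose2[OF smooth_c1[OF sG ekB]])
        show "continuous_on {0..T} (\<lambda>s. (s, y))" by (intro continuous_intros)
        show "(\<lambda>s. (s, y)) ` {0..T} \<subseteq> U" using inU y by blast
      qed
    qed
    have phi: "divm (\<lambda>y'. Smap (\<gamma> s y')) y = \<psi> s" if "s \<in> {0..T}" for s
      unfolding divm_def \<psi>_def using dGSs[OF that y] by (simp add: vec_eq_iff)
    have beq: "\<beta> s y = (1/2) *\<^sub>R integral {0..s} \<psi> + vskw (A 0 y)" if "s \<in> {0..T}" for s
    proof -
      have "integral {0..s} (\<lambda>s. divm (\<lambda>y'. Smap (\<gamma> s y')) y) = integral {0..s} \<psi>"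
        by (rule integral_cong) (use phi that in auto)
      thus ?thesis using assms(14)[of s y] by simp
    qed
    have "((\<lambda>s. (1/2) *\<^sub>R integral {0..s} \<psi> + vskw (A 0 y)) has_vector_derivative (1/2) *\<^sub>R \<psi> t)
           (at t within {0..T})"
      by (intro has_vector_derivative_add_const[THEN iffD2]
            bounded_linear.has_vector_derivative[OF bounded_linear_scaleR_right]
            integral_has_vector_derivative cont t)
    hence "((\<lambda>s. \<beta> s y) has_vector_derivative (1/2) *\<^sub>R \<psi> t) (at t within {0..T})"
      by (rule has_vector_derivative_transform[rotated 2]) (use t beq in auto)
    hence "dt T \<beta> t y = (1/2) *\<^sub>R \<psi> t"
      unfolding dt_def by (rule vector_derivative_within_closed_interval[OF assms(2) t])
    thus ?thesis unfolding \<psi>_def Gd_def .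
  qed
  have GR: "grad (\<lambda>y. dt T \<beta> t y) x = (\<chi> i j. (1/2) * (\<Sum>j'\<in>UNIV. Smap (D i j') $ j' $ j))"
  proof -
    have "dx i (\<lambda>y. dt T \<beta> t y $ j) x = (1/2) * (\<Sum>j'\<in>UNIV. Smap (D i j') $ j' $ j)" for i j
    proof (rule dx_local[OF assms(1) x])
      show "dt T \<beta> t y $ j = (1/2) * (\<Sum>j'\<in>UNIV. Smap (Gd j' y) $ j' $ j)" if "y \<in> \<Omega>" for y
        using dtb[OF that] by simp
      show "((\<lambda>h. (1/2) * (\<Sum>j'\<in>UNIV. Smap (Gd j' (x + h *\<^sub>R axis i 1)) $ j' $ j))
             has_vector_derivative (1/2) * (\<Sum>j'\<in>UNIV. Smap (D i j') $ j' $ j)) (at 0)"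
        by (intro has_vector_derivative_mult_right has_vector_derivative_sum hvd_Smap_entry Dline)
    qed
    thus ?thesis unfolding grad_def by (simp add: vec_eq_iff)
  qed
  define CuA where "CuA s = (\<chi> i j. \<Sum>k\<in>UNIV. \<Sum>l\<in>UNIV. eps i k l * pd (ek k) AA (s, x) $ l $ j)" for s
  have dtg: "dt T \<gamma> s x = Sinv (symm (CuA s))" if "s \<in> {0..T}" for s
  proof -
    have "curl (A s) x = CuA s"
      unfolding curl_def CuA_def using dA[OF that] by (simp add: vec_eq_iff)
    moreover have "Smap (dt T \<gamma> s x) = symm (curl (A s) x)" using assms(11)[OF that x] by simp
    ultimately show ?thesis by (metis Sinv_Smap)
  qed
  have GTT: "dt T (dt T \<gamma>) t x = Sinv (symm (\<chi> i j. \<Sum>k\<in>UNIV. \<Sum>l\<in>UNIV. eps i k l *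
                 pd e0 (pd (ek k) AA) (t, x) $ l $ j))"
  proof -
    have "(CuA has_vector_derivative (\<chi> i j. \<Sum>k\<in>UNIV. \<Sum>l\<in>UNIV. eps i k l *
                 pd e0 (pd (ek k) AA) (t, x) $ l $ j)) (at t)"
      unfolding CuA_def
      by (rule hvd_mat, simp, intro has_vector_derivative_sum has_vector_derivative_mult_right
            hvd_entry tA1[OF xU])
    note hC = this
    have "((\<lambda>s. Sinv (symm (CuA s))) has_vector_derivative Sinv (symm (\<chi> i j. \<Sum>k\<in>UNIV. \<Sum>l\<in>UNIV. eps i k l *
                 pd e0 (pd (ek k) AA) (t, x) $ l $ j))) (at t within {0..T})"
      by (rule has_vector_derivative_at_within[OF bounded_linear.has_vector_derivative[OF bl_Sinv_symm hC]])
    hence "((\<lambda>s. dt T \<gamma> s x) has_vector_derivative Sinv (symm (\<chi> i j. \<Sum>k\<in>UNIV. \<Sum>l\<in>UNIV. eps i k l *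
                 pd e0 (pd (ek k) AA) (t, x) $ l $ j))) (at t within {0..T})"
      by (rule has_vector_derivative_transform[rotated 2]) (use t dtg in auto)
    thus ?thesis
      unfolding dt_def[of T "dt T \<gamma>"] by (rule vector_derivative_within_closed_interval[OF assms(2) t])
  qed
  have swapA: "pd e0 (pd (ek k) AA) (t, x) = pd (ek k) (pd e0 AA) (t, x)" for k
    by (rule smooth_swap[OF assms(3) sA xU e0B ekB])
  have DA: "pd (ek k) (pd e0 AA) (t, x) =
            - (\<chi> l j. \<Sum>k'\<in>UNIV. \<Sum>l'\<in>UNIV. eps l k' l' * Smap (D k k') $ l' $ j)" for k
  proof -
    have "pd (ek k) (pd e0 AA) (t, x) = dx k (\<lambda>y. pd e0 AA (t, y)) x"
      unfolding pd_def[of "ek k" "pd e0 AA" "(t, x)"] dx_def lk ..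
    also have "\<dots> = - (\<chi> l j. \<Sum>k'\<in>UNIV. \<Sum>l'\<in>UNIV. eps l k' l' * Smap (D k k') $ l' $ j)"
    proof (rule dx_local[OF assms(1) x])
      fix y assume y: "y \<in> \<Omega>"
      have "dt T A t y = pd e0 AA (t, y)"
        unfolding dt_def
        by (rule vector_derivative_within_closed_interval[OF assms(2) t has_vector_derivative_at_within[OF tA0[OF yU[OF y]]]])
      moreover have "dt T A t y = - curl (\<lambda>y. Smap (\<gamma> t y)) y"
        using assms(10)[OF t y] by (simp add: eq_neg_iff_add_eq_0)
      moreover have "curl (\<lambda>y. Smap (\<gamma> t y)) y = (\<chi> l j. \<Sum>k'\<in>UNIV. \<Sum>l'\<in>UNIV. eps l k' l' * Smap (Gd k' y) $ l' $ j)"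
        unfolding curl_def using dGS[OF y] by (simp add: vec_eq_iff)
      ultimately show "pd e0 AA (t, y) = - (\<chi> l j. \<Sum>k'\<in>UNIV. \<Sum>l'\<in>UNIV. eps l k' l' * Smap (Gd k' y) $ l' $ j)"
        by simp
    next
      show "((\<lambda>h. - (\<chi> l j. \<Sum>k'\<in>UNIV. \<Sum>l'\<in>UNIV. eps l k' l' * Smap (Gd k' (x + h *\<^sub>R axis k 1)) $ l' $ j))
             has_vector_derivative - (\<chi> l j. \<Sum>k'\<in>UNIV. \<Sum>l'\<in>UNIV. eps l k' l' * Smap (D k k') $ l' $ j)) (at 0)"
        by (rule has_vector_derivative_minus, rule hvd_mat, simp,
            intro has_vector_derivative_sum has_vector_derivative_mult_right hvd_Smap_entry Dline)
    qed
    finally show ?thesis .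
  qed
  have S1: "D m k = D k m" for m k
    unfolding D_def by (rule smooth_swap[OF assms(3) sG xU ekB ekB])
  have Gsym: "transpose (Gd k y) = Gd k y" if y: "y \<in> \<Omega>" for k y
  proof -
    have "dx k (\<gamma> t) y = Gd k y"
      unfolding dx_def Gd_def by (rule vector_derivative_at[OF gG0[OF yU[OF y]]])
    moreover have "dx k (\<gamma> t) y = transpose (Gd k y)"
    proof (rule dx_local[OF assms(1) y])
      show "\<gamma> t y' = transpose (\<gamma> t y')" if "y' \<in> \<Omega>" for y'
        using assms(8)[OF t that] by simp
      show "((\<lambda>h. transpose (\<gamma> t (y + h *\<^sub>R axis k 1))) has_vector_derivative transpose (Gd k y)) (at 0)"
        unfolding Gd_def by (rule bounded_linear.has_vector_derivative[OF bl_transpose gG0[OF yU[OF y]]])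
    qed
    ultimately show ?thesis by simp
  qed
  have S2: "transpose (D m k) = D m k" for m k
  proof -
    have "dx m (\<lambda>y. Gd k y) x = D m k"
      unfolding dx_def by (rule vector_derivative_at[OF Dline])
    moreover have "dx m (\<lambda>y. Gd k y) x = transpose (D m k)"
    proof (rule dx_local[OF assms(1) x])
      show "Gd k y' = transpose (Gd k y')" if "y' \<in> \<Omega>" for y'
        using Gsym[OF that] by simp
      show "((\<lambda>h. transpose (Gd k (x + h *\<^sub>R axis m 1))) has_vector_derivative transpose (D m k)) (at 0)"
        by (rule bounded_linear.has_vector_derivative[OF bl_transpose Dline])
    qed
    ultimately show ?thesis by simp
  qed
  have FIN: "dt T (dt T \<gamma>) t x = Sinv (symm (\<chi> i j. \<Sum>k\<in>UNIV. \<Sum>l\<in>UNIV. eps i k l *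
            (- (\<chi> l j. \<Sum>k'\<in>UNIV. \<Sum>l'\<in>UNIV. eps l k' l' * Smap (D k k') $ l' $ j)) $ l $ j))"
    unfolding GTT swapA DA ..
  show "dt T (dt T \<gamma>) t x + Smap (inc (\<gamma> t) x) - 2 *\<^sub>R defo (\<lambda>y. dt T \<beta> t y) x
             - 2 *\<^sub>R hess (\<alpha> t) x = 0"
    unfolding FIN INC defo_def GR HE by (rule final_alg[OF S1 S2 DD])
qed

end
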